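(* Let $S\subset\mathbb{P}^6$ be the surface defined by $$x_1^2-x_2x_4=x_1x_5-x_3x_4=x_1x_3-x_2x_5=x_1x_6-x_3x_5=x_2x_6-x_3^2=x_4x_6-x_5^2=0,$$ $$x_1^2+x_1x_4+x_5x_7=x_1x_2+x_1^2+x_3x_7=x_1x_3+x_1x_5+x_6x_7=0,$$ let $U\subset S$ be the complement in $S$ of the three lines $x_1=x_2=x_3=x_5=x_6=0$, $x_1=x_3=x_4=x_5=x_6=0$, and $x_3=x_5=x_6=x_1+x_4=x_1+x_2=0$, and let $N_U(B)=\#\{x\in U(\mathbb{Q}):H(x)\leq B\}$. Let $M(B)$ denote the number of $\mathbf{x}\in\mathbb{Z}^7$ such that $$x_1^2-x_2x_4=x_1x_5-x_3x_4=x_1x_3-x_2x_5=x_1x_6-x_3x_5=x_2x_6-x_3^2=x_4x_6-x_5^2=0,$$ $$x_1^2-x_1x_4+x_5x_7=x_1^2-x_1x_2-x_3x_7=x_1x_3-x_1x_5+x_6x_7=0,$$ with $\gcd(x_1,\dots,x_7)=1$, $0<|x_1|\leq B$, $0<x_2,x_3,x_4\leq B$, $0<|x_5|\leq B$, $0<x_6\leq B$ and $|x_7|\leq B$. Then $$N_U(B)=2M(B)+O(B).$$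
   Context: For $x\in\mathbb{P}^{6}(\mathbb{Q})$ written as $x=[\mathbf{x}]$ with $\mathbf{x}\in\mathbb{Z}^7$ primitive, $H(x)=\max_i|x_i|$. The $O$-constant is absolute; $B\geq 1$. *)

theory Defs
  imports Complex_Main
begin

text \<open>Integer vectors in Z^7 are modelled as functions nat => int with coordinates
  x 1, ..., x 7 and x i = 0 outside {1..7}.\<close>

definition Z7 :: "(nat \<Rightarrow> int) set" where
  "Z7 = {x. \<forall>i. i \<notin> {1..7} \<longrightarrow> x i = 0}"

definition primitive7 :: "(nat \<Rightarrow> int) \<Rightarrow> bool" where
  "primitive7 x \<longleftrightarrow> x \<in> Z7 \<and> Gcd (x ` {1..7}) = 1"

definition height7 :: "(nat \<Rightarrow> int) \<Rightarrow> int" where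
  "height7 x = Max ((\<lambda>i. \<bar>x i\<bar>) ` {1..7})"

definition quad_eqs :: "(nat \<Rightarrow> int) \<Rightarrow> bool" where
  "quad_eqs x \<longleftrightarrow>
     x 1 ^ 2 - x 2 * x 4 = 0 \<and> x 1 * x 5 - x 3 * x 4 = 0 \<and> x 1 * x 3 - x 2 * x 5 = 0 \<and>
     x 1 * x 6 - x 3 * x 5 = 0 \<and> x 2 * x 6 - x 3 ^ 2 = 0 \<and> x 4 * x 6 - x 5 ^ 2 = 0"

text \<open>The equations of the surface S (homogeneous, so defined on integer representatives).\<close>
definition S_eqs :: "(nat \<Rightarrow> int) \<Rightarrow> bool" where
  "S_eqs x \<longleftrightarrow> quad_eqs x \<and>
     x 1 ^ 2 + x 1 * x 4 + x 5 * x 7 = 0 \<and>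
     x 1 * x 2 + x 1 ^ 2 + x 3 * x 7 = 0 \<and>
     x 1 * x 3 + x 1 * x 5 + x 6 * x 7 = 0"

definition on_lines :: "(nat \<Rightarrow> int) \<Rightarrow> bool" where
  "on_lines x \<longleftrightarrow>
     (x 1 = 0 \<and> x 2 = 0 \<and> x 3 = 0 \<and> x 5 = 0 \<and> x 6 = 0) \<or>
     (x 1 = 0 \<and> x 3 = 0 \<and> x 4 = 0 \<and> x 5 = 0 \<and> x 6 = 0) \<or>
     (x 3 = 0 \<and> x 5 = 0 \<and> x 6 = 0 \<and> x 1 + x 4 = 0 \<and> x 1 + x 2 = 0)"

text \<open>A rational point of P^6 is the class {x, -x} of a primitive integer vector x.
  N_U(B) counts such points of U = S minus the lines with H(x) <= B.\<close>
definition N_U :: "real \<Rightarrow> nat" where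
  "N_U B = card {{x, - x} | x. primitive7 x \<and> S_eqs x \<and> \<not> on_lines x
                              \<and> real_of_int (height7 x) \<le> B}"

definition M_count :: "real \<Rightarrow> nat" where
  "M_count B = card {x. x \<in> Z7 \<and> quad_eqs x \<and>
     x 1 ^ 2 - x 1 * x 4 + x 5 * x 7 = 0 \<and>
     x 1 ^ 2 - x 1 * x 2 - x 3 * x 7 = 0 \<and>
     x 1 * x 3 - x 1 * x 5 + x 6 * x 7 = 0 \<and>
     Gcd (x ` {1..7}) = 1 \<and>
     0 < \<bar>x 1\<bar> \<and> real_of_int \<bar>x 1\<bar> \<le> B \<and>
     0 < x 2 \<and> real_of_int (x 2) \<le> B \<and>
     0 < x 3 \<and> real_of_int (x 3) \<le> B \<and>
     0 < x 4 \<and> real_of_int (x 4) \<le> B \<and>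
     0 < \<bar>x 5\<bar> \<and> real_of_int \<bar>x 5\<bar> \<le> B \<and>
     0 < x 6 \<and> real_of_int (x 6) \<le> B \<and>
     real_of_int \<bar>x 7\<bar> \<le> B}"

end

theory Submission
  imports Defs
begin


lemma sq_gcd:
  fixes p q r :: int
  assumes e: "p * r = q^2" and g: "gcd p (gcd q r) = 1"
  shows "\<bar>r\<bar> = (gcd q r)^2"
proof -
  define d where "d = gcd p r"
  have "d^2 dvd p * r" unfolding d_def power2_eq_square by (simp add: mult_dvd_mono)
  hence "d^2 dvd q^2" using e by simp
  hence "d dvd q" by simp
  hence "d dvd gcd p (gcd q r)" unfolding d_def by simp
  hence d1: "d = 1" using g d_def by simp
  have "(gcd q r)^2 = gcd (q^2) (r^2)" by simp
  also have "\<dots> = gcd (r*p) (r*r)" using e by (simp add: power2_eq_square mult.commute)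
  also have "\<dots> = \<bar>r\<bar> * gcd p r" by (simp add: gcd_mult_distrib_int)
  finally show ?thesis using d1 d_def by simp
qed



lemma Gcd_abs_cong:
  fixes x y :: "nat \<Rightarrow> int"
  assumes "\<And>i. \<bar>y i\<bar> = \<bar>x i\<bar>"
  shows "Gcd (y ` I) = Gcd (x ` I)"
proof -
  have dv: "\<And>d i. d dvd y i \<longleftrightarrow> d dvd x i"
    by (metis assms dvd_abs_iff)
  have "Gcd (y ` I) dvd Gcd (x ` I)"
    by (rule Gcd_greatest) (metis Gcd_dvd dv image_eqI imageE)
  moreover have "Gcd (x ` I) dvd Gcd (y ` I)"
    by (rule Gcd_greatest) (metis Gcd_dvd dv image_eqI imageE)
  ultimately show ?thesis by (simp add: zdvd_antisym_nonneg)
qed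

lemma height_abs_cong:
  assumes "\<And>i. \<bar>y i\<bar> = \<bar>x i\<bar>"
  shows "height7 y = height7 x"
  unfolding height7_def using assms by simp

lemma height_le_iff:
  "real_of_int (height7 x) \<le> B \<longleftrightarrow> (\<forall>i\<in>{1..7}. real_of_int \<bar>x i\<bar> \<le> B)"
proof -
  let ?S = "(\<lambda>i. \<bar>x i\<bar>) ` {1..7::nat}"
  have f: "finite ?S" "?S \<noteq> {}" by auto
  have ge: "\<And>i. i \<in> {1..7} \<Longrightarrow> \<bar>x i\<bar> \<le> height7 x"
    unfolding height7_def using f by (intro Max_ge) auto
  have "height7 x \<in> ?S" unfolding height7_def using f by (rule Max_in)
  then obtain j where j: "j \<in> {1..7}" "height7 x = \<bar>x j\<bar>" by auto
  show ?thesis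
  proof
    assume "real_of_int (height7 x) \<le> B"
    thus "\<forall>i\<in>{1..7}. real_of_int \<bar>x i\<bar> \<le> B" using ge
      by (meson of_int_le_iff order_trans)
  next
    assume "\<forall>i\<in>{1..7}. real_of_int \<bar>x i\<bar> \<le> B"
    thus "real_of_int (height7 x) \<le> B" using j by simp
  qed
qed

lemma finite_box: "finite {x. x \<in> Z7 \<and> (\<forall>i\<in>{1..7}. real_of_int \<bar>x i\<bar> \<le> B)}"
proof -
  let ?K = "\<lfloor>B\<rfloor>"
  let ?f = "\<lambda>x::nat\<Rightarrow>int. map x [1..<8]"
  have inj: "inj_on ?f Z7"
  proof
    fix x y assume xy: "x \<in> Z7" "y \<in> Z7" "?f x = ?f y"
    show "x = y"
    proof
      fix i
      show "x i = y i"
      proof (cases "i \<in> {1..7}")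
        case True
        hence "i - 1 < length [1..<8::nat]" and "[1..<8] ! (i - 1) = i" by auto
        thus ?thesis using xy(3) by (metis nth_map)
      next
        case False thus ?thesis using xy unfolding Z7_def by auto
      qed
    qed
  qed
  have "?f ` {x. x \<in> Z7 \<and> (\<forall>i\<in>{1..7}. real_of_int \<bar>x i\<bar> \<le> B)}
        \<subseteq> {xs. set xs \<subseteq> {-?K..?K} \<and> length xs = 7}"
  proof (rule image_subsetI)
    fix x :: "nat \<Rightarrow> int"
    assume "x \<in> {x. x \<in> Z7 \<and> (\<forall>i\<in>{1..7}. real_of_int \<bar>x i\<bar> \<le> B)}"
    hence h: "\<forall>i\<in>{1..7}. real_of_int \<bar>x i\<bar> \<le> B" by simp
    have "set (map x [1..<8]) \<subseteq> {-?K..?K}"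
    proof
      fix v assume v: "v \<in> set (map x [1..<8])"
      then obtain i where i: "i \<in> {1..7}" "v = x i" by force
      hence "real_of_int \<bar>v\<bar> \<le> B" using h by auto
      hence "\<bar>v\<bar> \<le> ?K" by (metis le_floor_iff)
      thus "v \<in> {-?K..?K}" by auto
    qed
    thus "?f x \<in> {xs. set xs \<subseteq> {-?K..?K} \<and> length xs = 7}" by simp
  qed
  moreover have "finite {xs. set xs \<subseteq> {-?K..?K} \<and> length xs = 7}"
    by (rule finite_lists_length_eq) simp
  moreover have "inj_on ?f {x. x \<in> Z7 \<and> (\<forall>i\<in>{1..7}. real_of_int \<bar>x i\<bar> \<le> B)}"
    using inj by (rule inj_on_subset) auto
  ultimately show ?thesis by (meson inj_on_finite)
qed



lemma Gcd7: "Gcd ((x::nat\<Rightarrow>int) ` {1..7::nat}) = gcd (x 1) (gcd (x 2) (gcd (x 3) (gcd (x 4) (gcd (x 5) (gcd (x 6) (x 7))))))"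
proof -
  have "{1..7::nat} = {1,2,3,4,5,6,7}" by auto
  hence "x ` {1..7::nat} = {x 1, x 2, x 3, x 4, x 5, x 6, x 7}" by simp
  thus ?thesis by (simp only: Gcd_insert Gcd_empty) simp
qed

definition pt :: "(nat \<Rightarrow> int) \<Rightarrow> (nat \<Rightarrow> int) set" where "pt x = {x, -x}"

definition PP :: "real \<Rightarrow> (nat \<Rightarrow> int) set" where
  "PP B = {x. primitive7 x \<and> S_eqs x \<and> \<not> on_lines x \<and> real_of_int (height7 x) \<le> B}"

definition nz :: "(nat \<Rightarrow> int) \<Rightarrow> bool" where
  "nz x \<longleftrightarrow> x 1 \<noteq> 0 \<and> x 2 \<noteq> 0 \<and> x 3 \<noteq> 0 \<and> x 4 \<noteq> 0 \<and> x 5 \<noteq> 0 \<and> x 6 \<noteq> 0"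

definition MS :: "real \<Rightarrow> (nat \<Rightarrow> int) set" where
  "MS B = {x. x \<in> Z7 \<and> quad_eqs x \<and>
     x 1 ^ 2 - x 1 * x 4 + x 5 * x 7 = 0 \<and>
     x 1 ^ 2 - x 1 * x 2 - x 3 * x 7 = 0 \<and>
     x 1 * x 3 - x 1 * x 5 + x 6 * x 7 = 0 \<and>
     Gcd (x ` {1..7}) = 1 \<and>
     0 < \<bar>x 1\<bar> \<and> real_of_int \<bar>x 1\<bar> \<le> B \<and>
     0 < x 2 \<and> real_of_int (x 2) \<le> B \<and>
     0 < x 3 \<and> real_of_int (x 3) \<le> B \<and>
     0 < x 4 \<and> real_of_int (x 4) \<le> B \<and>
     0 < \<bar>x 5\<bar> \<and> real_of_int \<bar>x 5\<bar> \<le> B \<and>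
     0 < x 6 \<and> real_of_int (x 6) \<le> B \<and>
     real_of_int \<bar>x 7\<bar> \<le> B}"

lemma M_count_eq: "M_count B = card (MS B)"
  unfolding M_count_def MS_def ..

lemma N_U_eq: "N_U B = card (pt ` PP B)"
proof -
  have "{{x, - x} | x. primitive7 x \<and> S_eqs x \<and> \<not> on_lines x
                              \<and> real_of_int (height7 x) \<le> B} = pt ` PP B"
    unfolding pt_def PP_def by blast
  thus ?thesis unfolding N_U_def by simp
qed

lemma finite_PP: "finite (PP B)"
  by (rule finite_subset[OF _ finite_box[of B]])
     (auto simp: PP_def primitive7_def height_le_iff)

lemma neg_in_PP: "x \<in> PP B \<Longrightarrow> -x \<in> PP B"
proof -
  assume x: "x \<in> PP B"
  have ab: "\<And>i. \<bar>(-x) i\<bar> = \<bar>x i\<bar>" by simp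
  have "-x \<in> Z7" using x unfolding PP_def primitive7_def Z7_def by auto
  moreover have "Gcd ((-x) ` {1..7}) = 1" using x Gcd_abs_cong[OF ab]
    unfolding PP_def primitive7_def by simp
  moreover have "S_eqs (-x)" using x unfolding PP_def S_eqs_def quad_eqs_def
    by (simp add: power2_eq_square)
  moreover have "\<not> on_lines (-x)" using x unfolding PP_def on_lines_def by auto
  moreover have "height7 (-x) = height7 x" using height_abs_cong[OF ab] .
  ultimately show ?thesis using x unfolding PP_def primitive7_def by simp
qed

definition T1 :: "(nat \<Rightarrow> int) \<Rightarrow> (nat \<Rightarrow> int)" where
  "T1 x = (\<lambda>i. if i = 1 \<or> i = 3 then - x i else x i)"
definition T2 :: "(nat \<Rightarrow> int) \<Rightarrow> (nat \<Rightarrow> int)" where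
  "T2 x = (\<lambda>i. if i = 3 \<or> i = 5 \<or> i = 7 then - x i else x i)"

lemma T1_abs: "\<bar>T1 x i\<bar> = \<bar>x i\<bar>" by (simp add: T1_def)
lemma T2_abs: "\<bar>T2 x i\<bar> = \<bar>x i\<bar>" by (simp add: T2_def)
lemma T1_T1: "T1 (T1 x) = x" by (auto simp: T1_def)
lemma T2_T2: "T2 (T2 x) = x" by (auto simp: T2_def)

lemma T1_Z7: "x \<in> Z7 \<Longrightarrow> T1 x \<in> Z7" by (auto simp: T1_def Z7_def)
lemma T2_Z7: "x \<in> Z7 \<Longrightarrow> T2 x \<in> Z7" by (auto simp: T2_def Z7_def)

lemma T2_S: "S_eqs x \<Longrightarrow> S_eqs (T2 x)"
  unfolding S_eqs_def quad_eqs_def T2_def by (simp add: algebra_simps)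

lemma T1_S: "S_eqs x \<Longrightarrow> 
     T1 x 1 ^ 2 - T1 x 1 * T1 x 4 + T1 x 5 * T1 x 7 = 0 \<and>
     T1 x 1 ^ 2 - T1 x 1 * T1 x 2 - T1 x 3 * T1 x 7 = 0 \<and>
     T1 x 1 * T1 x 3 - T1 x 1 * T1 x 5 + T1 x 6 * T1 x 7 = 0 \<and> quad_eqs (T1 x)"
  unfolding S_eqs_def quad_eqs_def T1_def by (simp add: algebra_simps)

lemma T1_M: "x 1 ^ 2 - x 1 * x 4 + x 5 * x 7 = 0 \<Longrightarrow>
     x 1 ^ 2 - x 1 * x 2 - x 3 * x 7 = 0 \<Longrightarrow>
     x 1 * x 3 - x 1 * x 5 + x 6 * x 7 = 0 \<Longrightarrow> quad_eqs x \<Longrightarrow> S_eqs (T1 x)"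
  unfolding S_eqs_def quad_eqs_def T1_def by (simp add: algebra_simps)



definition Pm where "Pm B = {x \<in> PP B. nz x}"
definition Pe where "Pe B = {x \<in> PP B. \<not> nz x}"
definition Pp where "Pp B = {x \<in> Pm B. x 2 > 0}"
definition AA where "AA B = {x \<in> Pp B. x 3 < 0}"
definition AB where "AB B = {x \<in> Pp B. x 3 > 0}"

lemma nz_lines: "nz x \<Longrightarrow> \<not> on_lines x" by (auto simp: nz_def on_lines_def)

lemma seven: "(i::nat) \<in> {1..7} \<Longrightarrow> i = 1 \<or> i = 2 \<or> i = 3 \<or> i = 4 \<or> i = 5 \<or> i = 6 \<or> i = 7"
  by auto

lemma T2_PP: "x \<in> PP B \<Longrightarrow> nz x \<Longrightarrow> T2 x \<in> PP B \<and> nz (T2 x)"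
proof -
  assume x: "x \<in> PP B" and n: "nz x"
  have n2: "nz (T2 x)" using n by (simp add: nz_def T2_def)
  have "T2 x \<in> Z7" using x T2_Z7 by (auto simp: PP_def primitive7_def)
  moreover have "Gcd (T2 x ` {1..7}) = 1" using x Gcd_abs_cong[of "T2 x" x, OF T2_abs]
    by (simp add: PP_def primitive7_def)
  moreover have "S_eqs (T2 x)" using x T2_S by (simp add: PP_def)
  moreover have "height7 (T2 x) = height7 x" by (rule height_abs_cong[OF T2_abs])
  ultimately show ?thesis using x n2 nz_lines by (simp add: PP_def primitive7_def)
qed

lemma bij2: "bij_betw T2 (AB B) (AA B)"
proof (rule bij_betw_byWitness[where f'=T2])
  show "\<forall>a\<in>AB B. T2 (T2 a) = a" by (simp add: T2_T2)
  show "\<forall>a\<in>AA B. T2 (T2 a) = a" by (simp add: T2_T2)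
  show "T2 ` AB B \<subseteq> AA B"
    using T2_PP by (auto simp: AB_def AA_def Pp_def Pm_def T2_def)
  show "T2 ` AA B \<subseteq> AB B"
    using T2_PP by (auto simp: AB_def AA_def Pp_def Pm_def T2_def)
qed

lemma AA_MS: assumes x: "x \<in> AA B" shows "T1 x \<in> MS B"
proof -
  have P: "x \<in> PP B" and n: "nz x" and x2: "x 2 > 0" and x3: "x 3 < 0"
    using x by (auto simp: AA_def Pp_def Pm_def)
  have S: "S_eqs x" using P by (simp add: PP_def)
  have q: "x 1 ^ 2 = x 2 * x 4" "x 3 ^ 2 = x 2 * x 6" using S by (auto simp: S_eqs_def quad_eqs_def)
  have "x 1 ^ 2 > 0" using n by (simp add: nz_def)
  have "x 3 ^ 2 > 0" using n by (simp add: nz_def)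
  have "x 2 * x 4 > 0" using q \<open>x 1 ^ 2 > 0\<close> by simp
  hence x4: "x 4 > 0" using x2 by (simp add: zero_less_mult_iff)
  have "x 2 * x 6 > 0" using q \<open>x 3 ^ 2 > 0\<close> by simp
  hence x6: "x 6 > 0" using x2 by (simp add: zero_less_mult_iff)
  have b: "\<forall>i\<in>{1..7}. real_of_int \<bar>x i\<bar> \<le> B" using P by (simp add: PP_def height_le_iff)
  have b': "\<And>i. i \<in> {1..7} \<Longrightarrow> real_of_int \<bar>T1 x i\<bar> \<le> B" using b T1_abs by metis
  have g: "Gcd (T1 x ` {1..7}) = 1" using P Gcd_abs_cong[of "T1 x" x, OF T1_abs]
    by (simp add: PP_def primitive7_def)
  have z: "T1 x \<in> Z7" using P T1_Z7 by (auto simp: PP_def primitive7_def)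
  have e: "T1 x 1 ^ 2 - T1 x 1 * T1 x 4 + T1 x 5 * T1 x 7 = 0 \<and>
     T1 x 1 ^ 2 - T1 x 1 * T1 x 2 - T1 x 3 * T1 x 7 = 0 \<and>
     T1 x 1 * T1 x 3 - T1 x 1 * T1 x 5 + T1 x 6 * T1 x 7 = 0 \<and> quad_eqs (T1 x)"
    using T1_S[OF S] .
  have v: "T1 x 1 = - x 1" "T1 x 2 = x 2" "T1 x 3 = - x 3" "T1 x 4 = x 4" "T1 x 5 = x 5"
     "T1 x 6 = x 6" by (simp_all add: T1_def)
  have pos: "0 < \<bar>T1 x 1\<bar>" "0 < T1 x 2" "0 < T1 x 3" "0 < T1 x 4" "0 < \<bar>T1 x 5\<bar>" "0 < T1 x 6"
    using v n x2 x3 x4 x6 by (auto simp: nz_def)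
  have bb: "real_of_int \<bar>T1 x 1\<bar> \<le> B" "real_of_int \<bar>T1 x 2\<bar> \<le> B" "real_of_int \<bar>T1 x 3\<bar> \<le> B"
    "real_of_int \<bar>T1 x 4\<bar> \<le> B" "real_of_int \<bar>T1 x 5\<bar> \<le> B" "real_of_int \<bar>T1 x 6\<bar> \<le> B"
    "real_of_int \<bar>T1 x 7\<bar> \<le> B" by (rule b', simp)+
  show ?thesis unfolding MS_def using z e g pos bb by simp
qed

lemma MS_AA: assumes y: "y \<in> MS B" shows "T1 y \<in> AA B"
proof -
  have z: "y \<in> Z7" and q: "quad_eqs y" and g: "Gcd (y ` {1..7}) = 1"
    and e: "y 1 ^ 2 - y 1 * y 4 + y 5 * y 7 = 0"
     "y 1 ^ 2 - y 1 * y 2 - y 3 * y 7 = 0"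
     "y 1 * y 3 - y 1 * y 5 + y 6 * y 7 = 0"
    using y by (simp_all add: MS_def)
  have pos: "y 1 \<noteq> 0" "0 < y 2" "0 < y 3" "0 < y 4" "y 5 \<noteq> 0" "0 < y 6"
    using y by (auto simp: MS_def)
  have bnd: "real_of_int \<bar>y 1\<bar> \<le> B" "real_of_int \<bar>y 2\<bar> \<le> B" "real_of_int \<bar>y 3\<bar> \<le> B"
    "real_of_int \<bar>y 4\<bar> \<le> B" "real_of_int \<bar>y 5\<bar> \<le> B" "real_of_int \<bar>y 6\<bar> \<le> B"
    "real_of_int \<bar>y 7\<bar> \<le> B" using y by (auto simp: MS_def)
  have "\<forall>i\<in>{1..7}. real_of_int \<bar>y i\<bar> \<le> B"
  proof
    fix i :: nat assume "i \<in> {1..7}"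
    thus "real_of_int \<bar>y i\<bar> \<le> B" using seven bnd by blast
  qed
  hence h: "real_of_int (height7 (T1 y)) \<le> B"
    using height_abs_cong[of "T1 y" y, OF T1_abs] by (simp add: height_le_iff)
  have S: "S_eqs (T1 y)" using T1_M[OF e q] .
  have n: "nz (T1 y)" using pos by (simp add: nz_def T1_def)
  have pr: "primitive7 (T1 y)" using T1_Z7[OF z] g Gcd_abs_cong[of "T1 y" y, OF T1_abs]
    by (simp add: primitive7_def)
  have "T1 y 2 > 0" "T1 y 3 < 0" using pos by (simp_all add: T1_def)
  thus ?thesis using h S n pr nz_lines
    by (simp add: AA_def Pp_def Pm_def PP_def)
qed

lemma bij1: "bij_betw T1 (AA B) (MS B)"
  by (rule bij_betw_byWitness[where f'=T1]) (auto simp: T1_T1 AA_MS MS_AA)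

lemma card_Pp: "card (Pp B) = 2 * card (MS B)"
proof -
  have fin: "finite (Pp B)" using finite_PP[of B]
    by (rule rev_finite_subset) (auto simp: Pp_def Pm_def)
  have "Pp B = AA B \<union> AB B"
  proof -
    have "\<And>x. x \<in> Pp B \<Longrightarrow> x 3 \<noteq> 0" by (auto simp: Pp_def Pm_def nz_def)
    thus ?thesis unfolding AA_def AB_def by (auto simp: neq_iff)
  qed
  moreover have "AA B \<inter> AB B = {}" by (auto simp: AA_def AB_def)
  moreover have "finite (AA B)" "finite (AB B)" using fin
    by (auto simp: AA_def AB_def intro: rev_finite_subset)
  ultimately have "card (Pp B) = card (AA B) + card (AB B)" by (simp add: card_Un_disjoint)
  moreover have "card (AB B) = card (AA B)" using bij2 by (rule bij_betw_same_card)
  moreover have "card (AA B) = card (MS B)" using bij1 by (rule bij_betw_same_card)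
  ultimately show ?thesis by simp
qed

lemma card_pt_Pm: "card (pt ` Pm B) = 2 * card (MS B)"
proof -
  have "pt ` Pm B = pt ` Pp B"
  proof
    show "pt ` Pp B \<subseteq> pt ` Pm B" by (auto simp: Pp_def)
    show "pt ` Pm B \<subseteq> pt ` Pp B"
    proof
      fix p assume "p \<in> pt ` Pm B"
      then obtain x where x: "x \<in> Pm B" "p = pt x" by auto
      show "p \<in> pt ` Pp B"
      proof (cases "x 2 > 0")
        case True thus ?thesis using x by (auto simp: Pp_def)
      next
        case False
        hence "x 2 < 0" using x by (auto simp: Pm_def nz_def)
        moreover have "-x \<in> Pm B" using x neg_in_PP
          by (auto simp: Pm_def nz_def)
        moreover have "pt (-x) = p" using x by (auto simp: pt_def)
        ultimately show ?thesis by (force simp: Pp_def)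
      qed
    qed
  qed
  moreover have "inj_on pt (Pp B)"
  proof
    fix x y assume xy: "x \<in> Pp B" "y \<in> Pp B" "pt x = pt y"
    hence "x = y \<or> x = -y" by (auto simp: pt_def doubleton_eq_iff)
    moreover have "x \<noteq> -y" using xy by (auto simp: Pp_def)
    ultimately show "x = y" by blast
  qed
  ultimately show ?thesis using card_Pp by (simp add: card_image)
qed



definition K :: "real \<Rightarrow> int" where "K B = \<lfloor>sqrt B\<rfloor>"
definition TT :: "real \<Rightarrow> (int \<times> int \<times> int \<times> int \<times> int) set" where
  "TT B = {-1,0,1} \<times> {-1,0,1} \<times> {-1,0,1} \<times> {0..K B} \<times> {0..K B}"

definition E1 where "E1 B = {x. x \<in> Z7 \<and> x 1 = 0 \<and> x 2 = 0 \<and> x 3 = 0 \<and> x 7 = 0 \<and>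
   x 4 * x 6 = x 5 ^ 2 \<and> gcd (x 4) (gcd (x 5) (x 6)) = 1 \<and>
   real_of_int \<bar>x 4\<bar> \<le> B \<and> real_of_int \<bar>x 6\<bar> \<le> B}"
definition E2 where "E2 B = {x. x \<in> Z7 \<and> x 1 = 0 \<and> x 4 = 0 \<and> x 5 = 0 \<and> x 7 = 0 \<and>
   x 2 * x 6 = x 3 ^ 2 \<and> gcd (x 2) (gcd (x 3) (x 6)) = 1 \<and>
   real_of_int \<bar>x 2\<bar> \<le> B \<and> real_of_int \<bar>x 6\<bar> \<le> B}"

lemma sgn_vals: "sgn (a::int) \<in> {-1,0,1}" by (simp add: sgn_if)

lemma gcd_K: assumes "\<bar>r\<bar> = (g::int)^2" "real_of_int \<bar>r\<bar> \<le> B" "g \<ge> 0"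
  shows "g \<in> {0..K B}"
proof -
  have "real_of_int g ^ 2 \<le> B" using assms by (metis of_int_power)
  hence "real_of_int g \<le> sqrt B" by (rule real_le_rsqrt)
  hence "g \<le> K B" unfolding K_def by (simp add: le_floor_iff)
  thus ?thesis using assms by simp
qed

lemma sgn_abs_eq: "sgn (a::int) = sgn b \<Longrightarrow> \<bar>a\<bar> = \<bar>b\<bar> \<Longrightarrow> a = b"
  by (metis mult_sgn_abs)

lemma triple_inj:
  fixes a b c a' b' c' :: int
  assumes e: "a * c = b^2" "a' * c' = b'^2"
    and g: "gcd a (gcd b c) = 1" "gcd a' (gcd b' c') = 1"
    and s: "sgn a = sgn a'" "sgn b = sgn b'" "sgn c = sgn c'"
    and k: "gcd b a = gcd b' a'" "gcd b c = gcd b' c'"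
  shows "a = a' \<and> b = b' \<and> c = c'"
proof -
  have "\<bar>c\<bar> = (gcd b c)^2" using sq_gcd[OF e(1) g(1)] .
  moreover have "\<bar>c'\<bar> = (gcd b' c')^2" using sq_gcd[OF e(2) g(2)] .
  ultimately have "\<bar>c\<bar> = \<bar>c'\<bar>" using k by simp
  hence cc: "c = c'" using s(3) by (rule sgn_abs_eq[rotated])
  have g1: "gcd c (gcd b a) = 1" using g(1) by (simp add: ac_simps)
  have g2: "gcd c' (gcd b' a') = 1" using g(2) by (simp add: ac_simps)
  have "\<bar>a\<bar> = (gcd b a)^2" using sq_gcd[OF _ g1] e(1) by (simp add: mult.commute)
  moreover have "\<bar>a'\<bar> = (gcd b' a')^2" using sq_gcd[OF _ g2] e(2) by (simp add: mult.commute)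
  ultimately have "\<bar>a\<bar> = \<bar>a'\<bar>" using k by simp
  hence aa: "a = a'" using s(1) by (rule sgn_abs_eq[rotated])
  have "b^2 = b'^2" using e aa cc by simp
  hence "\<bar>b\<bar>^2 = \<bar>b'\<bar>^2" by simp
  hence "\<bar>b\<bar> = \<bar>b'\<bar>" by (simp only: power2_eq_iff_nonneg abs_ge_zero)
  hence "b = b'" using s(2) by (rule sgn_abs_eq[rotated])
  thus ?thesis using aa cc by simp
qed

lemma card_E1: "card (E1 B) \<le> card (TT B) \<and> finite (E1 B)"
proof -
  have fin: "finite (TT B)" by (simp add: TT_def)
  have inj: "inj_on (\<lambda>x. (sgn (x 4), sgn (x 5), sgn (x 6), gcd (x 5) (x 4), gcd (x 5) (x 6))) (E1 B)"
  proof
    fix x y assume x: "x \<in> E1 B" and y: "y \<in> E1 B"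
      and eq: "(sgn (x 4), sgn (x 5), sgn (x 6), gcd (x 5) (x 4), gcd (x 5) (x 6)) =
               (sgn (y 4), sgn (y 5), sgn (y 6), gcd (y 5) (y 4), gcd (y 5) (y 6))"
    have t: "x 4 = y 4 \<and> x 5 = y 5 \<and> x 6 = y 6"
      by (rule triple_inj) (use x y eq in \<open>auto simp: E1_def\<close>)
    show "x = y"
    proof
      fix i
      show "x i = y i"
      proof (cases "i \<in> {1..7}")
        case True
        then show ?thesis using seven[OF True] t x y by (auto simp: E1_def)
      next
        case False thus ?thesis using x y by (auto simp: E1_def Z7_def)
      qed
    qed
  qed
  have img: "(\<lambda>x. (sgn (x 4), sgn (x 5), sgn (x 6), gcd (x 5) (x 4), gcd (x 5) (x 6))) ` E1 B \<subseteq> TT B"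
  proof clarify
    fix x assume x: "x \<in> E1 B"
    have g0: "gcd (x 4) (gcd (x 5) (x 6)) = 1" using x unfolding E1_def by blast
    have g: "gcd (x 6) (gcd (x 5) (x 4)) = 1" using g0 by (simp add: ac_simps)
    have a4: "\<bar>x 4\<bar> = (gcd (x 5) (x 4))^2" using sq_gcd[OF _ g] x by (simp add: E1_def mult.commute)
    have a6: "\<bar>x 6\<bar> = (gcd (x 5) (x 6))^2" using sq_gcd[of "x 4" "x 6" "x 5"] x by (simp add: E1_def)
    show "(sgn (x 4), sgn (x 5), sgn (x 6), gcd (x 5) (x 4), gcd (x 5) (x 6)) \<in> TT B"
    proof -
      have "gcd (x 5) (x 4) \<in> {0..K B}" using gcd_K[OF a4] x by (simp add: E1_def)
      moreover have "gcd (x 5) (x 6) \<in> {0..K B}" using gcd_K[OF a6] x by (simp add: E1_def)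
      ultimately show ?thesis unfolding TT_def using sgn_vals[of "x 4"] sgn_vals[of "x 5"] sgn_vals[of "x 6"]
        by (simp only: mem_Times_iff fst_conv snd_conv)
    qed
  qed
  show ?thesis using card_inj_on_le[OF inj img fin] inj_on_finite[OF inj img fin] by simp
qed

lemma card_E2: "card (E2 B) \<le> card (TT B) \<and> finite (E2 B)"
proof -
  have fin: "finite (TT B)" by (simp add: TT_def)
  have inj: "inj_on (\<lambda>x. (sgn (x 2), sgn (x 3), sgn (x 6), gcd (x 3) (x 2), gcd (x 3) (x 6))) (E2 B)"
  proof
    fix x y assume x: "x \<in> E2 B" and y: "y \<in> E2 B"
      and eq: "(sgn (x 2), sgn (x 3), sgn (x 6), gcd (x 3) (x 2), gcd (x 3) (x 6)) =
               (sgn (y 2), sgn (y 3), sgn (y 6), gcd (y 3) (y 2), gcd (y 3) (y 6))"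
    have t: "x 2 = y 2 \<and> x 3 = y 3 \<and> x 6 = y 6"
      by (rule triple_inj) (use x y eq in \<open>auto simp: E2_def\<close>)
    show "x = y"
    proof
      fix i
      show "x i = y i"
      proof (cases "i \<in> {1..7}")
        case True
        then show ?thesis using seven[OF True] t x y by (auto simp: E2_def)
      next
        case False thus ?thesis using x y by (auto simp: E2_def Z7_def)
      qed
    qed
  qed
  have img: "(\<lambda>x. (sgn (x 2), sgn (x 3), sgn (x 6), gcd (x 3) (x 2), gcd (x 3) (x 6))) ` E2 B \<subseteq> TT B"
  proof clarify
    fix x assume x: "x \<in> E2 B"
    have g0: "gcd (x 2) (gcd (x 3) (x 6)) = 1" using x unfolding E2_def by blast
    have g: "gcd (x 6) (gcd (x 3) (x 2)) = 1" using g0 by (simp add: ac_simps)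
    have a4: "\<bar>x 2\<bar> = (gcd (x 3) (x 2))^2" using sq_gcd[OF _ g] x by (simp add: E2_def mult.commute)
    have a6: "\<bar>x 6\<bar> = (gcd (x 3) (x 6))^2" using sq_gcd[of "x 2" "x 6" "x 3"] x by (simp add: E2_def)
    show "(sgn (x 2), sgn (x 3), sgn (x 6), gcd (x 3) (x 2), gcd (x 3) (x 6)) \<in> TT B"
    proof -
      have "gcd (x 3) (x 2) \<in> {0..K B}" using gcd_K[OF a4] x by (simp add: E2_def)
      moreover have "gcd (x 3) (x 6) \<in> {0..K B}" using gcd_K[OF a6] x by (simp add: E2_def)
      ultimately show ?thesis unfolding TT_def using sgn_vals[of "x 2"] sgn_vals[of "x 3"] sgn_vals[of "x 6"]
        by (simp only: mem_Times_iff fst_conv snd_conv)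
    qed
  qed
  show ?thesis using card_inj_on_le[OF inj img fin] inj_on_finite[OF inj img fin] by simp
qed

lemma card_TT: assumes "B \<ge> 1" shows "real (card (TT B)) \<le> 108 * B"
proof -
  have K0: "K B \<ge> 0" unfolding K_def using assms by simp
  have c: "card (TT B) = 27 * nat (K B + 1) ^ 2"
    unfolding TT_def by (simp add: card_cartesian_product power2_eq_square)
  have s1: "sqrt B \<ge> 1" using assms by simp
  have "real_of_int (K B) \<le> sqrt B" unfolding K_def by simp
  hence "real_of_int (K B + 1) \<le> 2 * sqrt B" using s1 by linarith
  hence "real_of_int (K B + 1) ^ 2 \<le> (2 * sqrt B) ^ 2"
    using K0 by (intro power_mono) simp_all
  also have "\<dots> = 4 * B" using assms by (simp add: power_mult_distrib)
  finally have "real_of_int (K B + 1) ^ 2 \<le> 4 * B" .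
  moreover have "real (nat (K B + 1)) = real_of_int (K B + 1)" using K0 by simp
  ultimately show ?thesis unfolding c by simp
qed



lemma Pe_sub: assumes x: "x \<in> PP B" and n: "\<not> nz x" shows "x \<in> E1 B \<union> E2 B"
proof -
  have S: "S_eqs x" and nl: "\<not> on_lines x" and pr: "primitive7 x"
    and h: "real_of_int (height7 x) \<le> B" using x by (auto simp: PP_def)
  have q1: "x 1 ^ 2 = x 2 * x 4" and q5: "x 2 * x 6 = x 3 ^ 2" and q6: "x 4 * x 6 = x 5 ^ 2"
    and e1: "x 1 ^ 2 + x 1 * x 4 + x 5 * x 7 = 0" and e2: "x 1 * x 2 + x 1 ^ 2 + x 3 * x 7 = 0"
    and e3: "x 1 * x 3 + x 1 * x 5 + x 6 * x 7 = 0"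
    using S by (auto simp: S_eqs_def quad_eqs_def)
  have z: "x \<in> Z7" and g: "Gcd (x ` {1..7}) = 1" using pr by (auto simp: primitive7_def)
  have g7: "gcd (x 1) (gcd (x 2) (gcd (x 3) (gcd (x 4) (gcd (x 5) (gcd (x 6) (x 7)))))) = 1"
    using g by (simp only: Gcd7)
  have b: "\<forall>i\<in>{1..7}. real_of_int \<bar>x i\<bar> \<le> B" using h by (simp add: height_le_iff)
  have b2: "real_of_int \<bar>x 2\<bar> \<le> B" "real_of_int \<bar>x 4\<bar> \<le> B" "real_of_int \<bar>x 6\<bar> \<le> B"
    using b by auto
  have x6: "x 6 \<noteq> 0"
  proof
    assume x6: "x 6 = 0"
    hence x3: "x 3 = 0" using q5 by simp
    have x5: "x 5 = 0" using q6 x6 by simp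
    have f1: "x 1 * (x 1 + x 4) = 0" using e1 x5 by (simp add: algebra_simps power2_eq_square)
    have f2: "x 1 * (x 1 + x 2) = 0" using e2 x3 by (simp add: algebra_simps power2_eq_square)
    show False
    proof (cases "x 1 = 0")
      case True
      hence "x 2 * x 4 = 0" using q1 by simp
      thus False using nl True x3 x5 x6 by (auto simp: on_lines_def)
    next
      case False
      hence "x 1 + x 4 = 0" "x 1 + x 2 = 0" using f1 f2 by simp_all
      thus False using nl x3 x5 x6 by (auto simp: on_lines_def)
    qed
  qed
  have "x 2 = 0 \<or> x 4 = 0"
  proof (rule ccontr)
    assume "\<not> (x 2 = 0 \<or> x 4 = 0)"
    hence a: "x 2 \<noteq> 0" "x 4 \<noteq> 0" by auto
    have "x 1 ^ 2 \<noteq> 0" using q1 a by simp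
    moreover have "x 3 ^ 2 \<noteq> 0" using q5 a x6 by (metis mult_eq_0_iff)
    moreover have "x 5 ^ 2 \<noteq> 0" using q6 a x6 by (metis mult_eq_0_iff)
    ultimately have "nz x" using a x6 by (simp add: nz_def)
    thus False using n by simp
  qed
  thus ?thesis
  proof
    assume x2: "x 2 = 0"
    have x3: "x 3 = 0" using q5 x2 by simp
    have x1: "x 1 = 0" using q1 x2 by simp
    have x7: "x 7 = 0" using e3 x1 x6 by simp
    have "gcd (x 4) (gcd (x 5) (x 6)) = 1" using g7 x1 x2 x3 x7 by simp
    hence "x \<in> E1 B" using z x1 x2 x3 x7 q6 b2 by (simp add: E1_def)
    thus ?thesis by simp
  next
    assume x4: "x 4 = 0"
    have x5: "x 5 = 0" using q6 x4 by simp
    have x1: "x 1 = 0" using q1 x4 by simp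
    have x7: "x 7 = 0" using e3 x1 x6 by simp
    have "gcd (x 2) (gcd (x 3) (x 6)) = 1" using g7 x1 x4 x5 x7 by simp
    hence "x \<in> E2 B" using z x1 x4 x5 x7 q5 b2 by (simp add: E2_def)
    thus ?thesis by simp
  qed
qed

theorem lemma3p1:
  shows "\<exists>C::real. \<forall>B::real. B \<ge> 1 \<longrightarrow>
           \<bar>real (N_U B) - 2 * real (M_count B)\<bar> \<le> C * B"
proof (intro exI allI impI)
  fix B :: real assume B: "B \<ge> 1"
  have PP: "PP B = Pm B \<union> Pe B" by (auto simp: Pm_def Pe_def)
  have finPP: "finite (pt ` PP B)" using finite_PP by simp
  have finPe: "finite (Pe B)" using finite_PP[of B] by (rule rev_finite_subset) (auto simp: Pe_def)
  have N: "N_U B = card (pt ` Pm B \<union> pt ` Pe B)" unfolding N_U_eq PP by (simp add: image_Un)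
  have M: "card (pt ` Pm B) = 2 * M_count B" using card_pt_Pm M_count_eq by simp
  have lo: "card (pt ` Pm B) \<le> N_U B" unfolding N
    by (rule card_mono) (use finPP PP in \<open>auto simp: image_Un\<close>)
  have "card (Pe B) \<le> card (E1 B \<union> E2 B)"
    by (rule card_mono) (use card_E1 card_E2 Pe_sub in \<open>auto simp: Pe_def\<close>)
  also have "\<dots> \<le> card (E1 B) + card (E2 B)" by (rule card_Un_le)
  also have "\<dots> \<le> 2 * card (TT B)" using card_E1[of B] card_E2[of B] by simp
  finally have pe: "real (card (Pe B)) \<le> 2 * real (card (TT B))" by linarith
  have "N_U B \<le> card (pt ` Pm B) + card (pt ` Pe B)" unfolding N by (rule card_Un_le)
  also have "card (pt ` Pe B) \<le> card (Pe B)" using finPe by (rule card_image_le)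
  finally have hi: "N_U B \<le> card (pt ` Pm B) + card (Pe B)" by simp
  show "\<bar>real (N_U B) - 2 * real (M_count B)\<bar> \<le> 216 * B"
    using lo hi M pe card_TT[OF B] by linarith
qed

end
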